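(* Let $L$ be a distributive lattice with $|L|\ge2$. Then: (1) $\mathrm{FBL}\langle L\rangle$ is not Dedekind $\sigma$-complete; (2) the norm of $\mathrm{FBL}\langle L\rangle$ is not order continuous; (3) $\mathrm{FBL}\langle L\rangle$ has no atoms.
   Context: $L^*$ is the set of all lattice homomorphisms $x^*:L\to[-1,1]$; for $x\in L$, $\delta_x:L^*\to\mathbb R$ is $\delta_x(x^* )=x^*(x)$. A function $f:L^*\to\mathbb R$ is positively homogeneous if $f(\lambda x^* )=\lambda f(x^* )$ whenever $\lambda\ge0$ and $\lambda x^*\in L^*$; for such $f$, $\|f\|=\sup\{\sum_{i=1}^m|f(x_i^* )|: m\in\mathbb N,\ x_i^*\in L^*,\ \sup_{x\in L}\sum_{i=1}^m|x_i^*(x)|\le1\}$. $\mathrm{FBL}\langle L\rangle$ is the norm closure of the vector sublattice generated by $\{\delta_x:x\in L\}$ inside the Banach lattice of positively homogeneous functions on $L^*$ with finite norm, with pointwise order and operations. *)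

theory Defs
  imports Complex_Main "HOL-Library.Countable_Set"
begin

text \<open>Functions on L* are represented as functions of type ('a => real) => real
  which vanish outside L* (so that pointwise equality on L* is equality).\<close>

definition Lstar :: "('a::lattice \<Rightarrow> real) set" where
  "Lstar = {xs. (\<forall>x y. xs (sup x y) = max (xs x) (xs y))
              \<and> (\<forall>x y. xs (inf x y) = min (xs x) (xs y))
              \<and> (\<forall>x. xs x \<in> {-1..1})}"

definition delta :: "'a::lattice \<Rightarrow> (('a \<Rightarrow> real) \<Rightarrow> real)" where
  "delta x = (\<lambda>xs. if xs \<in> Lstar then xs x else 0)"

definition pos_homog :: "(('a::lattice \<Rightarrow> real) \<Rightarrow> real) \<Rightarrow> bool" where
  "pos_homog f \<longleftrightarrow> (\<forall>lam xs. lam \<ge> 0 \<and> xs \<in> Lstar \<and> (\<lambda>x. lam * xs x) \<in> Lstar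
       \<longrightarrow> f (\<lambda>x. lam * xs x) = lam * f xs)"

definition fbl_norm_sums :: "(('a::lattice \<Rightarrow> real) \<Rightarrow> real) \<Rightarrow> real set" where
  "fbl_norm_sums f = {(\<Sum>xs\<leftarrow>xss. \<bar>f xs\<bar>) | xss.
       set xss \<subseteq> Lstar \<and> (\<forall>x. (\<Sum>xs\<leftarrow>xss. \<bar>xs x\<bar>) \<le> 1)}"

definition fbl_norm :: "(('a::lattice \<Rightarrow> real) \<Rightarrow> real) \<Rightarrow> real" where
  "fbl_norm f = Sup (fbl_norm_sums f)"

definition H_space :: "(('a::lattice \<Rightarrow> real) \<Rightarrow> real) set" where
  "H_space = {f. pos_homog f \<and> bdd_above (fbl_norm_sums f) \<and> (\<forall>xs. xs \<notin> Lstar \<longrightarrow> f xs = 0)}"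

inductive_set gen_sublattice :: "(('a::lattice \<Rightarrow> real) \<Rightarrow> real) set" where
  gen_delta: "delta x \<in> gen_sublattice"
| gen_add: "f \<in> gen_sublattice \<Longrightarrow> g \<in> gen_sublattice \<Longrightarrow> (\<lambda>t. f t + g t) \<in> gen_sublattice"
| gen_scale: "f \<in> gen_sublattice \<Longrightarrow> (\<lambda>t. c * f t) \<in> gen_sublattice"
| gen_sup: "f \<in> gen_sublattice \<Longrightarrow> g \<in> gen_sublattice \<Longrightarrow> (\<lambda>t. max (f t) (g t)) \<in> gen_sublattice"
| gen_inf: "f \<in> gen_sublattice \<Longrightarrow> g \<in> gen_sublattice \<Longrightarrow> (\<lambda>t. min (f t) (g t)) \<in> gen_sublattice"

definition FBL :: "(('a::lattice \<Rightarrow> real) \<Rightarrow> real) set" where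
  "FBL = {f \<in> H_space. \<forall>e>0. \<exists>g\<in>gen_sublattice. fbl_norm (\<lambda>t. f t - g t) < e}"

definition is_sup_in :: "'b::order set \<Rightarrow> 'b set \<Rightarrow> 'b \<Rightarrow> bool" where
  "is_sup_in S A s \<longleftrightarrow> s \<in> S \<and> (\<forall>a\<in>A. a \<le> s) \<and> (\<forall>u\<in>S. (\<forall>a\<in>A. a \<le> u) \<longrightarrow> s \<le> u)"

definition is_inf_in :: "'b::order set \<Rightarrow> 'b set \<Rightarrow> 'b \<Rightarrow> bool" where
  "is_inf_in S A s \<longleftrightarrow> s \<in> S \<and> (\<forall>a\<in>A. s \<le> a) \<and> (\<forall>u\<in>S. (\<forall>a\<in>A. u \<le> a) \<longrightarrow> u \<le> s)"

definition dedekind_sigma_complete :: "'b::order set \<Rightarrow> bool" where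
  "dedekind_sigma_complete S \<longleftrightarrow>
     (\<forall>A. A \<subseteq> S \<and> A \<noteq> {} \<and> countable A \<and> (\<exists>u\<in>S. \<forall>a\<in>A. a \<le> u) \<longrightarrow> (\<exists>s. is_sup_in S A s))"

text \<open>Order continuity of the norm N: whenever a net decreases to 0 its norms tend to 0.
  A decreasing net is represented by its (downward directed) range D.\<close>
definition order_continuous_norm ::
  "(('c \<Rightarrow> real)) set \<Rightarrow> (('c \<Rightarrow> real) \<Rightarrow> real) \<Rightarrow> bool" where
  "order_continuous_norm S N \<longleftrightarrow>
     (\<forall>D. D \<subseteq> S \<and> D \<noteq> {} \<and> (\<forall>x\<in>D. \<forall>y\<in>D. \<exists>z\<in>D. z \<le> x \<and> z \<le> y)
          \<and> is_inf_in S D (\<lambda>_. 0) \<longrightarrow> (\<forall>e>0. \<exists>x\<in>D. N x < e))"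

definition is_atom_in :: "(('c \<Rightarrow> real)) set \<Rightarrow> ('c \<Rightarrow> real) \<Rightarrow> bool" where
  "is_atom_in S a \<longleftrightarrow> a \<in> S \<and> (\<lambda>_. 0) \<le> a \<and> a \<noteq> (\<lambda>_. 0) \<and>
     (\<forall>y\<in>S. (\<lambda>_. 0) \<le> y \<and> y \<le> a \<longrightarrow> (\<exists>c::real. y = (\<lambda>t. c * a t)))"

end

theory Submission
  imports Defs
begin


lemma prime_filter_exists:
  fixes u v :: "'a::distrib_lattice"
  assumes nle: "\<not> v \<le> u"
  shows "\<exists>F. (\<forall>x y. x \<in> F \<longrightarrow> x \<le> y \<longrightarrow> y \<in> F) \<and> (\<forall>x y. inf x y \<in> F \<longleftrightarrow> x \<in> F \<and> y \<in> F)
     \<and> (\<forall>x y. sup x y \<in> F \<longleftrightarrow> x \<in> F \<or> y \<in> F) \<and> v \<in> F \<and> u \<notin> F"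
proof -
  define \<A> where "\<A> = {F::'a set. (\<forall>x y. x \<in> F \<longrightarrow> x \<le> y \<longrightarrow> y \<in> F) \<and> (\<forall>x y. x \<in> F \<longrightarrow> y \<in> F \<longrightarrow> inf x y \<in> F) \<and> v \<in> F \<and> u \<notin> F}"
  have "{y. v \<le> y} \<in> \<A>" using nle unfolding \<A>_def by auto
  hence ne: "\<A> \<noteq> {}" by blast
  have ch: "\<Union>\<C> \<in> \<A>" if "\<C> \<noteq> {}" "subset.chain \<A> \<C>" for \<C>
  proof -
    have sub: "\<C> \<subseteq> \<A>" and lin: "\<forall>X\<in>\<C>. \<forall>Y\<in>\<C>. X \<subseteq> Y \<or> Y \<subseteq> X"
      using that(2) by (auto simp: subset_chain_def)
    have "\<forall>x y. x \<in> \<Union>\<C> \<longrightarrow> x \<le> y \<longrightarrow> y \<in> \<Union>\<C>" using sub unfolding \<A>_def by blast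
    moreover have "\<forall>x y. x \<in> \<Union>\<C> \<longrightarrow> y \<in> \<Union>\<C> \<longrightarrow> inf x y \<in> \<Union>\<C>"
    proof (intro allI impI)
      fix x y assume "x \<in> \<Union>\<C>" "y \<in> \<Union>\<C>"
      then obtain X Y where XY: "X \<in> \<C>" "Y \<in> \<C>" "x \<in> X" "y \<in> Y" by blast
      show "inf x y \<in> \<Union>\<C>"
      proof (cases "X \<subseteq> Y")
        case True
        then show ?thesis using XY sub unfolding \<A>_def by blast
      next
        case False
        then have "Y \<subseteq> X" using lin XY by blast
        then show ?thesis using XY sub unfolding \<A>_def by blast
      qed
    qed
    moreover have "v \<in> \<Union>\<C>" using sub that(1) unfolding \<A>_def by blast
    moreover have "u \<notin> \<Union>\<C>" using sub unfolding \<A>_def by blast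
    ultimately show ?thesis unfolding \<A>_def by blast
  qed
  obtain F where FA: "F \<in> \<A>" and maxF: "\<forall>X\<in>\<A>. F \<subseteq> X \<longrightarrow> X = F"
    using subset_Zorn_nonempty[OF ne ch] by blast
  have up: "\<forall>x y. x \<in> F \<longrightarrow> x \<le> y \<longrightarrow> y \<in> F" and infc: "\<forall>x y. x \<in> F \<longrightarrow> y \<in> F \<longrightarrow> inf x y \<in> F"
    and vF: "v \<in> F" and uF: "u \<notin> F" using FA unfolding \<A>_def by auto
  have ext: "\<exists>f\<in>F. inf f x \<le> u" if "x \<notin> F" for x
  proof (rule ccontr)
    assume nex: "\<not> (\<exists>f\<in>F. inf f x \<le> u)"
    define G where "G = {z. \<exists>f\<in>F. inf f x \<le> z}"
    have "G \<in> \<A>" unfolding \<A>_def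
    proof (intro CollectI conjI allI impI)
      fix a b assume "a \<in> G" "a \<le> b" then show "b \<in> G" unfolding G_def using order_trans by blast
    next
      fix a b assume "a \<in> G" "b \<in> G"
      then obtain f1 f2 where "f1 \<in> F" "f2 \<in> F" "inf f1 x \<le> a" "inf f2 x \<le> b" unfolding G_def by blast
      moreover have "inf (inf f1 f2) x \<le> inf a b" using calculation
        by (meson inf.bounded_iff inf_le1 inf_le2 order_trans)
      ultimately show "inf a b \<in> G" unfolding G_def using infc by blast
    next
      show "v \<in> G" unfolding G_def using vF by (auto intro!: bexI[of _ v])
    next
      show "u \<notin> G" using nex unfolding G_def by blast
    qed
    moreover have "F \<subseteq> G" unfolding G_def by (auto intro: inf_le1)
    moreover have "x \<in> G" unfolding G_def using vF inf_le2 by blast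
    ultimately show False using maxF that by blast
  qed
  have prime: "x \<in> F \<or> y \<in> F" if "sup x y \<in> F" for x y
  proof (rule ccontr)
    assume "\<not> (x \<in> F \<or> y \<in> F)"
    then obtain f1 f2 where f: "f1 \<in> F" "f2 \<in> F" "inf f1 x \<le> u" "inf f2 y \<le> u" using ext by blast
    have "inf (inf f1 f2) (sup x y) \<in> F" using infc f that by blast
    moreover have "inf (inf f1 f2) (sup x y) = sup (inf (inf f1 f2) x) (inf (inf f1 f2) y)"
      by (rule inf_sup_distrib1)
    moreover have "sup (inf (inf f1 f2) x) (inf (inf f1 f2) y) \<le> u" using f
      by (meson inf.cobounded1 inf.cobounded2 inf_mono order_trans sup.boundedI order_refl)
    ultimately show False using up uF by metis
  qed
  show ?thesis
  proof (intro exI conjI allI)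
    fix x y show "inf x y \<in> F \<longleftrightarrow> x \<in> F \<and> y \<in> F" using infc up by (meson inf_le1 inf_le2)
  next
    fix x y show "sup x y \<in> F \<longleftrightarrow> x \<in> F \<or> y \<in> F" using prime up by (meson sup_ge1 sup_ge2)
  qed (use up vF uF in auto)
qed

lemma chi_exists:
  assumes "\<exists>a b :: 'a::distrib_lattice. a \<noteq> b"
  shows "\<exists>(u::'a) v chi. chi \<in> Lstar \<and> chi u = 0 \<and> chi v = 1 \<and> (\<forall>x. chi x = 0 \<or> chi x = 1)"
proof -
  obtain a b :: 'a where "a \<noteq> b" using assms by blast
  then obtain u v :: 'a where nle: "\<not> v \<le> u" by (meson order.eq_iff)
  obtain F where up: "\<forall>x y. x \<in> F \<longrightarrow> x \<le> y \<longrightarrow> y \<in> F" and i: "\<forall>x y. inf x y \<in> F \<longleftrightarrow> x \<in> F \<and> y \<in> F"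
     and s: "\<forall>x y. sup x y \<in> F \<longleftrightarrow> x \<in> F \<or> y \<in> F" and vF: "v \<in> F" and uF: "u \<notin> F"
    using prime_filter_exists[OF nle] by blast
  define chi where "chi = (\<lambda>x. if x \<in> F then 1 else (0::real))"
  have "chi \<in> Lstar" unfolding Lstar_def chi_def using i s by auto
  moreover have "chi u = 0" "chi v = 1" "\<forall>x. chi x = 0 \<or> chi x = 1" using vF uF unfolding chi_def by auto
  ultimately show ?thesis by blast
qed



lemma Lstar_range: "xs \<in> Lstar \<Longrightarrow> \<bar>xs x\<bar> \<le> 1"
  unfolding Lstar_def by (auto simp: abs_le_iff)

lemma Lstar_affine:
  assumes "xs \<in> Lstar" "c \<ge> 0" "\<forall>x. c * xs x + d \<in> {-1..1}"
  shows "(\<lambda>x. c * xs x + d) \<in> Lstar"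
proof -
  have m1: "max (c*a+d) (c*b+d) = c * max a b + d" for a b :: real
  proof (cases "a \<le> b")
    case True then have "c*a \<le> c*b" using assms(2) by (simp add: mult_left_mono)
    then show ?thesis using True by (simp add: max_absorb2)
  next
    case False then have "c*b \<le> c*a" using assms(2) by (intro mult_left_mono) auto
    then show ?thesis using False by (simp add: max_absorb1)
  qed
  have m2: "min (c*a+d) (c*b+d) = c * min a b + d" for a b :: real
  proof (cases "a \<le> b")
    case True then have "c*a \<le> c*b" using assms(2) by (simp add: mult_left_mono)
    then show ?thesis using True by (simp add: min_absorb1)
  next
    case False then have "c*b \<le> c*a" using assms(2) by (intro mult_left_mono) auto
    then show ?thesis using False by (simp add: min_absorb2)
  qed
  show ?thesis using assms(1,3) unfolding Lstar_def by (auto simp: m1 m2)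
qed

lemma sums_zero_mem: "0 \<in> fbl_norm_sums f"
  unfolding fbl_norm_sums_def by (auto intro!: exI[of _ "[]"])

lemma point_in_sums: "q \<in> Lstar \<Longrightarrow> \<bar>f q\<bar> \<in> fbl_norm_sums f"
  unfolding fbl_norm_sums_def
  by (auto intro!: exI[of _ "[q]"] simp: Lstar_range)

lemma point_le_norm: "bdd_above (fbl_norm_sums f) \<Longrightarrow> q \<in> Lstar \<Longrightarrow> \<bar>f q\<bar> \<le> fbl_norm f"
  unfolding fbl_norm_def by (rule cSup_upper[OF point_in_sums])

lemma norm_le:
  fixes f g h :: "('a::lattice \<Rightarrow> real) \<Rightarrow> real"
  assumes bg: "bdd_above (fbl_norm_sums g)" and bh: "bdd_above (fbl_norm_sums h)"
    and a: "a \<ge> 0" and b: "b \<ge> 0"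
    and le: "\<forall>t\<in>Lstar. \<bar>f t\<bar> \<le> a * \<bar>g t\<bar> + b * \<bar>h t\<bar>"
  shows "bdd_above (fbl_norm_sums f) \<and> fbl_norm f \<le> a * fbl_norm g + b * fbl_norm h"
proof -
  have *: "s \<le> a * fbl_norm g + b * fbl_norm h" if sm: "s \<in> fbl_norm_sums f" for s
  proof -
    obtain xss :: "('a \<Rightarrow> real) list" where s: "s = (\<Sum>xs\<leftarrow>xss. \<bar>f xs\<bar>)" and xss: "set xss \<subseteq> Lstar"
      and c: "\<forall>x. (\<Sum>xs\<leftarrow>xss. \<bar>xs x\<bar>) \<le> 1"
      using sm unfolding fbl_norm_sums_def by blast
    have "s \<le> (\<Sum>xs\<leftarrow>xss. a * \<bar>g xs\<bar> + b * \<bar>h xs\<bar>)"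
      unfolding s by (rule sum_list_mono) (use xss le in auto)
    also have "\<dots> = a * (\<Sum>xs\<leftarrow>xss. \<bar>g xs\<bar>) + b * (\<Sum>xs\<leftarrow>xss. \<bar>h xs\<bar>)"
      by (simp add: sum_list_addf sum_list_const_mult)
    also have "\<dots> \<le> a * fbl_norm g + b * fbl_norm h"
    proof (rule add_mono; rule mult_left_mono)
      have "(\<Sum>xs\<leftarrow>xss. \<bar>g xs\<bar>) \<in> fbl_norm_sums g" unfolding fbl_norm_sums_def using xss c by blast
      then show "(\<Sum>xs\<leftarrow>xss. \<bar>g xs\<bar>) \<le> fbl_norm g" unfolding fbl_norm_def using bg by (rule cSup_upper)
      have "(\<Sum>xs\<leftarrow>xss. \<bar>h xs\<bar>) \<in> fbl_norm_sums h" unfolding fbl_norm_sums_def using xss c by blast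
      then show "(\<Sum>xs\<leftarrow>xss. \<bar>h xs\<bar>) \<le> fbl_norm h" unfolding fbl_norm_def using bh by (rule cSup_upper)
    qed (use a b in auto)
    finally show ?thesis .
  qed
  have "bdd_above (fbl_norm_sums f)" using * by (meson bdd_aboveI)
  moreover have "fbl_norm f \<le> a * fbl_norm g + b * fbl_norm h"
    unfolding fbl_norm_def by (rule cSup_least) (use sums_zero_mem * in \<open>auto simp: fbl_norm_def\<close>)
  ultimately show ?thesis by blast
qed

lemma norm_le1:
  assumes bg: "bdd_above (fbl_norm_sums g)"
    and le: "\<forall>t\<in>Lstar. \<bar>f t\<bar> \<le> \<bar>g t\<bar>"
  shows "bdd_above (fbl_norm_sums f) \<and> fbl_norm f \<le> fbl_norm g"
  using norm_le[OF bg bg, of 1 0 f] le by simp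

lemma norm_zero: "fbl_norm (\<lambda>t::('a::lattice \<Rightarrow> real). 0) = 0"
proof -
  have "fbl_norm_sums (\<lambda>t::('a::lattice \<Rightarrow> real). 0) = {0}"
    unfolding fbl_norm_sums_def by (auto intro!: exI[of _ "[]"])
  then show ?thesis unfolding fbl_norm_def by simp
qed

lemma gen_zero_out: "f \<in> gen_sublattice \<Longrightarrow> xs \<notin> Lstar \<Longrightarrow> f xs = 0"
  by (induction rule: gen_sublattice.induct) (auto simp: delta_def)

lemma gen_homog: "f \<in> gen_sublattice \<Longrightarrow> pos_homog f"
proof (induction rule: gen_sublattice.induct)
  case (gen_delta x) then show ?case by (auto simp: pos_homog_def delta_def)
next
  case (gen_add f g) then show ?case by (auto simp: pos_homog_def algebra_simps)
next
  case (gen_scale f c) then show ?case by (auto simp: pos_homog_def algebra_simps)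
next
  case (gen_sup f g) then show ?case by (auto simp: pos_homog_def max_mult_distrib_left)
next
  case (gen_inf f g) then show ?case by (auto simp: pos_homog_def min_mult_distrib_left)
qed

lemma gen_bdd: fixes f :: "('a::lattice \<Rightarrow> real) \<Rightarrow> real" shows "f \<in> gen_sublattice \<Longrightarrow> bdd_above (fbl_norm_sums f)"
proof (induction rule: gen_sublattice.induct)
  case (gen_delta x)
  have "s \<le> 1" if sm: "s \<in> fbl_norm_sums (delta x)" for s
  proof -
    obtain xss :: "('a \<Rightarrow> real) list" where s: "s = (\<Sum>xs\<leftarrow>xss. \<bar>delta x xs\<bar>)" and xss: "set xss \<subseteq> Lstar"
      and c: "\<forall>x. (\<Sum>xs\<leftarrow>xss. \<bar>xs x\<bar>) \<le> 1"
      using sm unfolding fbl_norm_sums_def by blast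
    have "s = (\<Sum>xs\<leftarrow>xss. \<bar>xs x\<bar>)" unfolding s
      by (rule arg_cong[where f=sum_list], rule map_cong) (use xss in \<open>auto simp: delta_def\<close>)
    then show ?thesis using c by simp
  qed
  then show ?case by (meson bdd_aboveI)
next
  case (gen_add f g)
  have "\<forall>t\<in>Lstar. \<bar>f t + g t\<bar> \<le> 1 * \<bar>f t\<bar> + 1 * \<bar>g t\<bar>" by (simp add: abs_triangle_ineq)
  then show ?case using norm_le[where g=f and h=g and a=1 and b=1 and f="\<lambda>t. f t + g t"] gen_add.IH by auto
next
  case (gen_scale f c) then show ?case using norm_le[where g=f and h=f and a="\<bar>c\<bar>" and b=0 and f="\<lambda>t. c * f t"] by (auto simp: abs_mult)
next
  case (gen_sup f g)
  have "\<forall>t\<in>Lstar. \<bar>max (f t) (g t)\<bar> \<le> 1 * \<bar>f t\<bar> + 1 * \<bar>g t\<bar>" by (simp add: max_def)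
  then show ?case using norm_le[where g=f and h=g and a=1 and b=1 and f="\<lambda>t. max (f t) (g t)"] gen_sup.IH by auto
next
  case (gen_inf f g)
  have "\<forall>t\<in>Lstar. \<bar>min (f t) (g t)\<bar> \<le> 1 * \<bar>f t\<bar> + 1 * \<bar>g t\<bar>" by (simp add: min_def)
  then show ?case using norm_le[where g=f and h=g and a=1 and b=1 and f="\<lambda>t. min (f t) (g t)"] gen_inf.IH by auto
qed

lemma gen_H: fixes f :: "('a::lattice \<Rightarrow> real) \<Rightarrow> real" assumes "f \<in> gen_sublattice" shows "f \<in> H_space"
proof -
  have "pos_homog f" "bdd_above (fbl_norm_sums f)" "\<forall>xs. xs \<notin> Lstar \<longrightarrow> f xs = 0"
    using gen_homog[OF assms] gen_bdd[OF assms] gen_zero_out[OF assms] by auto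
  then show ?thesis unfolding H_space_def by simp
qed

lemma gen_FBL: fixes f :: "('a::lattice \<Rightarrow> real) \<Rightarrow> real" assumes "f \<in> gen_sublattice" shows "f \<in> FBL"
proof -
  have "fbl_norm (\<lambda>t. f t - f t) = 0" using norm_zero[where 'a='a] by simp
  then have "\<forall>e>0. \<exists>g\<in>gen_sublattice. fbl_norm (\<lambda>t. f t - g t) < e" using assms by (intro allI impI bexI[of _ f]) auto
  then show ?thesis unfolding FBL_def using gen_H[OF assms] by simp
qed

lemma max_diff_le: "\<bar>max a b - max a' b'\<bar> \<le> \<bar>a - a'\<bar> + \<bar>b - (b'::real)\<bar>"
  by (simp add: max_def abs_if split: if_splits)

lemma min_diff_le: "\<bar>min a b - min a' b'\<bar> \<le> \<bar>a - a'\<bar> + \<bar>b - (b'::real)\<bar>"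
  by (simp add: min_def abs_if split: if_splits)

lemma gen_lip: fixes f :: "('a::lattice \<Rightarrow> real) \<Rightarrow> real" shows "f \<in> gen_sublattice \<Longrightarrow> \<exists>C\<ge>0. \<forall>p::'a\<Rightarrow>real\<in>Lstar. \<forall>q\<in>Lstar. \<forall>d. (\<forall>x. \<bar>q x - p x\<bar> \<le> d) \<longrightarrow> \<bar>f q - f p\<bar> \<le> C * d"
proof (induction rule: gen_sublattice.induct)
  case (gen_delta x)
  show ?case by (rule exI[of _ 1]) (auto simp: delta_def)
next
  case (gen_add f g)
  then obtain C1 C2 where C: "C1 \<ge> 0" "C2 \<ge> 0"
    "\<forall>p\<in>Lstar. \<forall>q\<in>Lstar. \<forall>d. (\<forall>x. \<bar>q x - p x\<bar> \<le> d) \<longrightarrow> \<bar>f q - f p\<bar> \<le> C1 * d"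
    "\<forall>p\<in>Lstar. \<forall>q\<in>Lstar. \<forall>d. (\<forall>x. \<bar>q x - p x\<bar> \<le> d) \<longrightarrow> \<bar>g q - g p\<bar> \<le> C2 * d" by blast
  show ?case
  proof (rule exI[of _ "C1 + C2"], intro conjI ballI allI impI)
    fix p q :: "'a \<Rightarrow> real" and d assume "p \<in> Lstar" "q \<in> Lstar" "\<forall>x. \<bar>q x - p x\<bar> \<le> d"
    then have "\<bar>f q - f p\<bar> \<le> C1 * d" "\<bar>g q - g p\<bar> \<le> C2 * d" using C by blast+
    then show "\<bar>f q + g q - (f p + g p)\<bar> \<le> (C1 + C2) * d" by (simp add: algebra_simps)
  qed (use C in auto)
next
  case (gen_scale f c)
  then obtain C1 where C: "C1 \<ge> 0"
    "\<forall>p\<in>Lstar. \<forall>q\<in>Lstar. \<forall>d. (\<forall>x. \<bar>q x - p x\<bar> \<le> d) \<longrightarrow> \<bar>f q - f p\<bar> \<le> C1 * d" by blast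
  show ?case
  proof (rule exI[of _ "\<bar>c\<bar> * C1"], intro conjI ballI allI impI)
    fix p q :: "'a \<Rightarrow> real" and d assume "p \<in> Lstar" "q \<in> Lstar" "\<forall>x. \<bar>q x - p x\<bar> \<le> d"
    then have "\<bar>f q - f p\<bar> \<le> C1 * d" using C by blast
    then have "\<bar>c\<bar> * \<bar>f q - f p\<bar> \<le> \<bar>c\<bar> * (C1 * d)" by (simp add: mult_left_mono)
    moreover have "\<bar>c * f q - c * f p\<bar> = \<bar>c\<bar> * \<bar>f q - f p\<bar>" by (metis abs_mult right_diff_distrib)
    ultimately show "\<bar>c * f q - c * f p\<bar> \<le> \<bar>c\<bar> * C1 * d" by (simp add: mult.assoc)
  qed (use C in auto)
next
  case (gen_sup f g)
  then obtain C1 C2 where C: "C1 \<ge> 0" "C2 \<ge> 0"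
    "\<forall>p\<in>Lstar. \<forall>q\<in>Lstar. \<forall>d. (\<forall>x. \<bar>q x - p x\<bar> \<le> d) \<longrightarrow> \<bar>f q - f p\<bar> \<le> C1 * d"
    "\<forall>p\<in>Lstar. \<forall>q\<in>Lstar. \<forall>d. (\<forall>x. \<bar>q x - p x\<bar> \<le> d) \<longrightarrow> \<bar>g q - g p\<bar> \<le> C2 * d" by blast
  show ?case
  proof (rule exI[of _ "C1 + C2"], intro conjI ballI allI impI)
    fix p q :: "'a \<Rightarrow> real" and d assume "p \<in> Lstar" "q \<in> Lstar" "\<forall>x. \<bar>q x - p x\<bar> \<le> d"
    then have "\<bar>f q - f p\<bar> \<le> C1 * d" "\<bar>g q - g p\<bar> \<le> C2 * d" using C by blast+
    moreover have "0 \<le> C1 * d" "0 \<le> C2 * d" using calculation by auto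
    ultimately show "\<bar>max (f q) (g q) - max (f p) (g p)\<bar> \<le> (C1 + C2) * d" using max_diff_le[of "f q" "g q" "f p" "g p"] by (simp add: algebra_simps)
  qed (use C in auto)
next
  case (gen_inf f g)
  then obtain C1 C2 where C: "C1 \<ge> 0" "C2 \<ge> 0"
    "\<forall>p\<in>Lstar. \<forall>q\<in>Lstar. \<forall>d. (\<forall>x. \<bar>q x - p x\<bar> \<le> d) \<longrightarrow> \<bar>f q - f p\<bar> \<le> C1 * d"
    "\<forall>p\<in>Lstar. \<forall>q\<in>Lstar. \<forall>d. (\<forall>x. \<bar>q x - p x\<bar> \<le> d) \<longrightarrow> \<bar>g q - g p\<bar> \<le> C2 * d" by blast
  show ?case
  proof (rule exI[of _ "C1 + C2"], intro conjI ballI allI impI)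
    fix p q :: "'a \<Rightarrow> real" and d assume "p \<in> Lstar" "q \<in> Lstar" "\<forall>x. \<bar>q x - p x\<bar> \<le> d"
    then have "\<bar>f q - f p\<bar> \<le> C1 * d" "\<bar>g q - g p\<bar> \<le> C2 * d" using C by blast+
    moreover have "0 \<le> C1 * d" "0 \<le> C2 * d" using calculation by auto
    ultimately show "\<bar>min (f q) (g q) - min (f p) (g p)\<bar> \<le> (C1 + C2) * d" using min_diff_le[of "f q" "g q" "f p" "g p"] by (simp add: algebra_simps)
  qed (use C in auto)
qed



lemma gen_diff: "f \<in> gen_sublattice \<Longrightarrow> g \<in> gen_sublattice \<Longrightarrow> (\<lambda>t. f t - g t) \<in> gen_sublattice"
  using gen_add[OF _ gen_scale[of g "-1"], of f] by simp

lemma gen_cmul: "f \<in> gen_sublattice \<Longrightarrow> (\<lambda>t. c * f t) \<in> gen_sublattice"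
  by (rule gen_scale)

lemma gen_zero: "(\<lambda>t. 0) \<in> gen_sublattice"
  using gen_scale[OF gen_delta, of 0] by simp

lemma gen_abs: "f \<in> gen_sublattice \<Longrightarrow> (\<lambda>t. \<bar>f t\<bar>) \<in> gen_sublattice"
proof -
  assume f: "f \<in> gen_sublattice"
  have "(\<lambda>t. max (f t) (-1 * f t)) = (\<lambda>t. \<bar>f t\<bar>)" by (auto simp: max_def abs_if)
  then show ?thesis using gen_sup[OF f gen_scale[OF f, of "-1"]] by simp
qed

lemma gen_pos: "f \<in> gen_sublattice \<Longrightarrow> (\<lambda>t. max (f t) 0) \<in> gen_sublattice"
  using gen_sup[OF _ gen_zero, of f] by simp

lemma FBL_H: "f \<in> FBL \<Longrightarrow> f \<in> H_space"
  unfolding FBL_def by blast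

lemma H_gen_diff_bdd:
  fixes f g :: "('a::lattice \<Rightarrow> real) \<Rightarrow> real"
  assumes "f \<in> H_space" "g \<in> gen_sublattice"
  shows "bdd_above (fbl_norm_sums (\<lambda>t. f t - g t))"
proof -
  have "\<forall>t\<in>Lstar. \<bar>f t - g t\<bar> \<le> 1 * \<bar>f t\<bar> + 1 * \<bar>g t\<bar>" by (simp add: abs_triangle_ineq4)
  then show ?thesis using norm_le[where g=f and h=g and a=1 and b=1 and f="\<lambda>t. f t - g t"]
      assms gen_bdd[OF assms(2)] unfolding H_space_def by auto
qed

lemma FBL_cont:
  fixes f :: "('a::lattice \<Rightarrow> real) \<Rightarrow> real"
  assumes f: "f \<in> FBL" and p: "p \<in> Lstar" and e: "e > 0"
  shows "\<exists>d>0. \<forall>q\<in>Lstar. (\<forall>x. \<bar>q x - p x\<bar> \<le> d) \<longrightarrow> \<bar>f q - f p\<bar> < e"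
proof -
  obtain g where g: "g \<in> gen_sublattice" and fg: "fbl_norm (\<lambda>t. f t - g t) < e/3"
  proof -
    have "e/3 > 0" using e by simp
    then show ?thesis using f that unfolding FBL_def by blast
  qed
  have bdd: "bdd_above (fbl_norm_sums (\<lambda>t. f t - g t))" using H_gen_diff_bdd[OF FBL_H[OF f] g] .
  have pt: "\<bar>f q - g q\<bar> < e/3" if "q \<in> Lstar" for q
    using point_le_norm[OF bdd that] fg by simp
  obtain C where C: "C \<ge> 0" "\<forall>p\<in>Lstar. \<forall>q\<in>Lstar. \<forall>d. (\<forall>x. \<bar>q x - p x\<bar> \<le> d) \<longrightarrow> \<bar>g q - g p\<bar> \<le> C * d"
    using gen_lip[OF g] by blast
  define d where "d = e / (3 * (C + 1))"
  have d: "d > 0" using e C unfolding d_def by auto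
  have Cd: "C * d \<le> e/3"
  proof -
    have "C * d \<le> (C+1) * d" using d by (simp add: distrib_right)
    also have "\<dots> = e/3" unfolding d_def using C by (simp add: field_simps)
    finally show ?thesis .
  qed
  show ?thesis
  proof (intro exI[of _ d] conjI ballI impI)
    fix q assume q: "q \<in> Lstar" "\<forall>x. \<bar>q x - p x\<bar> \<le> d"
    have "\<bar>g q - g p\<bar> \<le> C * d" using C q p by blast
    then show "\<bar>f q - f p\<bar> < e" using pt[OF q(1)] pt[OF p] Cd by linarith
  qed (rule d)
qed

lemma FBL_min_gen:
  fixes f g :: "('a::lattice \<Rightarrow> real) \<Rightarrow> real"
  assumes f: "f \<in> FBL" and g: "g \<in> gen_sublattice"
  shows "(\<lambda>t. min (f t) (g t)) \<in> FBL"
proof -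
  have fH: "f \<in> H_space" using FBL_H[OF f] .
  have gH: "g \<in> H_space" using gen_H[OF g] .
  have "pos_homog (\<lambda>t. min (f t) (g t))"
    using fH gH unfolding H_space_def pos_homog_def by (auto simp: min_mult_distrib_left)
  moreover have "bdd_above (fbl_norm_sums (\<lambda>t. min (f t) (g t)))"
  proof -
    have "\<forall>t\<in>Lstar. \<bar>min (f t) (g t)\<bar> \<le> 1 * \<bar>f t\<bar> + 1 * \<bar>g t\<bar>" by (simp add: min_def)
    then show ?thesis using norm_le[where g=f and h=g and a=1 and b=1 and f="\<lambda>t. min (f t) (g t)"]
      fH gH unfolding H_space_def by auto
  qed
  moreover have "\<forall>xs. xs \<notin> Lstar \<longrightarrow> min (f xs) (g xs) = 0" using fH gH unfolding H_space_def by auto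
  ultimately have H: "(\<lambda>t. min (f t) (g t)) \<in> H_space" unfolding H_space_def by blast
  have "\<exists>h\<in>gen_sublattice. fbl_norm (\<lambda>t. min (f t) (g t) - h t) < e" if e: "e > 0" for e
  proof -
    obtain g' where g': "g' \<in> gen_sublattice" and fg: "fbl_norm (\<lambda>t. f t - g' t) < e"
      using f e unfolding FBL_def by blast
    have bdd: "bdd_above (fbl_norm_sums (\<lambda>t. f t - g' t))" using H_gen_diff_bdd[OF fH g'] .
    have "\<forall>t\<in>Lstar. \<bar>min (f t) (g t) - min (g' t) (g t)\<bar> \<le> \<bar>f t - g' t\<bar>" by (simp add: min_def abs_if)
    then have "fbl_norm (\<lambda>t. min (f t) (g t) - min (g' t) (g t)) \<le> fbl_norm (\<lambda>t. f t - g' t)"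
      using norm_le1[OF bdd, of "\<lambda>t. min (f t) (g t) - min (g' t) (g t)"] by auto
    then show ?thesis using fg gen_inf[OF g' g] by (intro bexI[of _ "\<lambda>t. min (g' t) (g t)"]) auto
  qed
  then show ?thesis using H unfolding FBL_def by blast
qed



lemma half_shift:
  assumes "xs \<in> Lstar" "\<bar>t\<bar> \<le> 1/2"
  shows "(\<lambda>x. 1/2 * xs x + t) \<in> Lstar"
proof (rule Lstar_affine[OF assms(1)])
  show "\<forall>x. 1/2 * xs x + t \<in> {-1..1}"
  proof
    fix x have "\<bar>xs x\<bar> \<le> 1" using Lstar_range[OF assms(1)] .
    then show "1/2 * xs x + t \<in> {-1..1}" using assms(2) by (simp add: abs_le_iff) linarith
  qed
qed simp

lemma half_in: "xs \<in> Lstar \<Longrightarrow> (\<lambda>x. 1/2 * xs x) \<in> Lstar"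
  using half_shift[of xs 0] by simp

lemma FBL_half: assumes f: "f \<in> FBL" and xs: "xs \<in> Lstar" shows "f (\<lambda>x. 1/2 * xs x) = 1/2 * f xs"
proof -
  have ph: "pos_homog f" using FBL_H[OF f] unfolding H_space_def by auto
  show ?thesis using ph[unfolded pos_homog_def, rule_format, of "1/2" xs] half_in[OF xs] xs by simp
qed

lemma FBL_out: "f \<in> FBL \<Longrightarrow> xs \<notin> Lstar \<Longrightarrow> f xs = 0"
  using FBL_H unfolding H_space_def by auto

lemma delta_at: "xs \<in> Lstar \<Longrightarrow> delta x xs = xs x"
  by (simp add: delta_def)



lemma real_ineq1:
  fixes a b n m :: real assumes "n \<ge> 0" "m \<ge> 0"
  shows "min (n * max a 0) (max (b - a) 0) \<le> max (b - a - m * max ((-1) * a) 0) 0"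
proof (cases "a \<ge> 0")
  case True then show ?thesis by (simp add: min_le_iff_disj)
next
  case False then have z: "n * max a 0 = 0" by simp
  have "min (n * max a 0) (max (b - a) 0) \<le> 0"
    using min.cobounded1[of "n * max a 0" "max (b - a) 0"] z by linarith
  moreover have "0 \<le> max (b - a - m * max ((-1) * a) 0) 0" by simp
  ultimately show ?thesis by linarith
qed

lemma not_oc:
  fixes u v :: "'a::distrib_lattice" and chi :: "'a \<Rightarrow> real"
  assumes chi: "chi \<in> Lstar" "chi u = 0" "chi v = 1"
  shows "\<not> order_continuous_norm (FBL :: (('a \<Rightarrow> real) \<Rightarrow> real) set) fbl_norm"
proof
  assume oc: "order_continuous_norm (FBL :: (('a \<Rightarrow> real) \<Rightarrow> real) set) fbl_norm"
  define d :: "nat \<Rightarrow> ('a \<Rightarrow> real) \<Rightarrow> real"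
    where "d n = (\<lambda>t. max (delta v t - delta u t - real n * \<bar>delta u t\<bar>) 0)" for n
  have dgen: "d n \<in> gen_sublattice" for n
    unfolding d_def by (intro gen_pos gen_diff gen_delta gen_cmul gen_abs)
  have dFBL: "d n \<in> FBL" for n using gen_FBL[OF dgen] .
  have dchi: "d n chi = 1" for n unfolding d_def using chi by (simp add: delta_at)
  have dnorm: "fbl_norm (d n) \<ge> 1" for n
    using point_le_norm[OF gen_bdd[OF dgen] chi(1)] dchi by simp
  have dmono: "d m \<le> d n" if "n \<le> m" for n m
  proof (rule le_funI)
    fix t
    have *: "real n * \<bar>delta u t\<bar> \<le> real m * \<bar>delta u t\<bar>" using that by (intro mult_right_mono) auto
    show "d m t \<le> d n t" unfolding d_def using * by (intro max.mono) auto
  qed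
  have d_nonneg: "(\<lambda>_. 0) \<le> d n" for n unfolding d_def by (auto intro: le_funI)
  have inf0: "is_inf_in FBL (range d) (\<lambda>_. 0)"
    unfolding is_inf_in_def
  proof (intro conjI ballI impI)
    show "(\<lambda>_. 0) \<in> FBL" using gen_FBL[OF gen_zero] .
  next
    fix a assume "a \<in> range d" then show "(\<lambda>_. 0) \<le> a" using d_nonneg by auto
  next
    fix w assume w: "w \<in> FBL" and lb: "\<forall>a\<in>range d. w \<le> a"
    have wd: "w xs \<le> d n xs" for n xs using lb by (auto simp: le_fun_def)
    have c1: "w ys \<le> 0" if ys: "ys \<in> Lstar" "ys u \<noteq> 0" for ys
    proof -
      obtain n where n: "\<bar>ys v - ys u\<bar> / \<bar>ys u\<bar> < real n" using reals_Archimedean2 by blast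
      have "\<bar>ys v - ys u\<bar> < real n * \<bar>ys u\<bar>" using n ys(2) by (simp add: pos_divide_less_eq)
      then have "ys v - ys u - real n * \<bar>ys u\<bar> < 0" using abs_ge_self[of "ys v - ys u"] by linarith
      then have "d n ys = 0" unfolding d_def using ys(1) by (simp add: delta_at)
      then show ?thesis using wd[of ys n] by simp
    qed
    show "w \<le> (\<lambda>_. 0)"
    proof (rule le_funI)
      fix xs show "w xs \<le> 0"
      proof (cases "xs \<in> Lstar")
        case False then show ?thesis using FBL_out[OF w] by simp
      next
        case xs: True
        show ?thesis
        proof (cases "xs u = 0")
          case False then show ?thesis using c1 xs by blast
        next
          case True
          show ?thesis
          proof (rule ccontr)
            assume "\<not> w xs \<le> 0"
            then have pos: "w (\<lambda>x. 1/2 * xs x) > 0" using FBL_half[OF w xs] by simp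
            obtain e where e: "e > 0" "\<forall>q\<in>Lstar. (\<forall>x. \<bar>q x - 1/2 * xs x\<bar> \<le> e) \<longrightarrow> \<bar>w q - w (\<lambda>x. 1/2 * xs x)\<bar> < w (\<lambda>x. 1/2 * xs x)"
              using FBL_cont[OF w half_in[OF xs] pos] by blast
            define t where "t = min e (1/2)"
            have t: "t > 0" "t \<le> e" "\<bar>t\<bar> \<le> 1/2" using e unfolding t_def by auto
            have q: "(\<lambda>x. 1/2 * xs x + t) \<in> Lstar" using half_shift[OF xs t(3)] .
            have "\<bar>w (\<lambda>x. 1/2 * xs x + t) - w (\<lambda>x. 1/2 * xs x)\<bar> < w (\<lambda>x. 1/2 * xs x)"
              using e(2)[rule_format, OF q] t by simp
            then have "w (\<lambda>x. 1/2 * xs x + t) > 0" by linarith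
            moreover have "w (\<lambda>x. 1/2 * xs x + t) \<le> 0" using c1[OF q] True t by simp
            ultimately show False by linarith
          qed
        qed
      qed
    qed
  qed
  have dir: "\<forall>x\<in>range d. \<forall>y\<in>range d. \<exists>z\<in>range d. z \<le> x \<and> z \<le> y"
  proof (intro ballI)
    fix x y assume "x \<in> range d" "y \<in> range d"
    then obtain n m where "x = d n" "y = d m" by blast
    then show "\<exists>z\<in>range d. z \<le> x \<and> z \<le> y" using dmono[of n "max n m"] dmono[of m "max n m"] by auto
  qed
  have "range d \<subseteq> FBL" using dFBL by auto
  then obtain x where "x \<in> range d" "fbl_norm x < 1"
    using oc[unfolded order_continuous_norm_def, rule_format, of "range d" 1] dir inf0 by auto
  then show False using dnorm by (auto simp: not_less[symmetric])
qed


lemma not_dsc: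
  fixes u v :: "'a::distrib_lattice" and chi :: "'a \<Rightarrow> real"
  assumes chi: "chi \<in> Lstar" "chi u = 0" "chi v = 1"
  shows "\<not> dedekind_sigma_complete (FBL :: (('a \<Rightarrow> real) \<Rightarrow> real) set)"
proof
  assume dsc: "dedekind_sigma_complete (FBL :: (('a \<Rightarrow> real) \<Rightarrow> real) set)"
  define f :: "nat \<Rightarrow> ('a \<Rightarrow> real) \<Rightarrow> real"
    where "f n = (\<lambda>t. min (real n * max (delta u t) 0) (max (delta v t - delta u t) 0))" for n
  define b :: "('a \<Rightarrow> real) \<Rightarrow> real" where "b = (\<lambda>t. max (delta v t - delta u t) 0)"
  have fgen: "f n \<in> gen_sublattice" for n unfolding f_def by (intro gen_inf gen_cmul gen_pos gen_diff gen_delta)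
  have bgen: "b \<in> gen_sublattice" unfolding b_def by (intro gen_pos gen_diff gen_delta)
  have fb: "f n \<le> b" for n unfolding f_def b_def by (rule le_funI) simp
  have cnt: "countable (range f)" by simp
  have "\<exists>s. is_sup_in FBL (range f) s"
  proof (rule dsc[unfolded dedekind_sigma_complete_def, rule_format], intro conjI)
    show "range f \<subseteq> FBL" using gen_FBL[OF fgen] by auto
    show "range f \<noteq> {}" by simp
    show "countable (range f)" by (rule cnt)
    show "\<exists>u\<in>FBL. \<forall>a\<in>range f. a \<le> u" using gen_FBL[OF bgen] fb by auto
  qed
  then obtain s where s: "s \<in> FBL" "\<forall>n. f n \<le> s" "\<forall>w\<in>FBL. (\<forall>a\<in>range f. a \<le> w) \<longrightarrow> s \<le> w"
    unfolding is_sup_in_def by auto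
  have p: "(\<lambda>x. 1/2 * chi x) \<in> Lstar" using half_in[OF chi(1)] .
  obtain e where e: "e > 0" "\<forall>q\<in>Lstar. (\<forall>x. \<bar>q x - 1/2 * chi x\<bar> \<le> e) \<longrightarrow> \<bar>s q - s (\<lambda>x. 1/2 * chi x)\<bar> < 1/8"
    using FBL_cont[OF s(1) p, of "1/8"] by auto
  define t where "t = min e (1/2)"
  have t: "t > 0" "t \<le> e" "\<bar>t\<bar> \<le> 1/2" "\<bar>-t\<bar> \<le> 1/2" using e unfolding t_def by auto
  define q1 where "q1 = (\<lambda>x. 1/2 * chi x + t)"
  define q2 where "q2 = (\<lambda>x. 1/2 * chi x + (-t))"
  have q1: "q1 \<in> Lstar" unfolding q1_def using half_shift[OF chi(1) t(3)] .
  have q2: "q2 \<in> Lstar" unfolding q2_def using half_shift[OF chi(1) t(4)] .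
  have "\<forall>x. \<bar>q1 x - 1/2 * chi x\<bar> \<le> e" unfolding q1_def using t by simp
  then have s1: "\<bar>s q1 - s (\<lambda>x. 1/2 * chi x)\<bar> < 1/8" using e(2) q1 by blast
  have "\<forall>x. \<bar>q2 x - 1/2 * chi x\<bar> \<le> e" unfolding q2_def using t by simp
  then have s2: "\<bar>s q2 - s (\<lambda>x. 1/2 * chi x)\<bar> < 1/8" using e(2) q2 by blast
  obtain n where n: "1 / t < real n" using reals_Archimedean2 by blast
  have nt: "real n * t > 1" using n t(1) by (simp add: pos_divide_less_eq)
  have dq1: "delta u q1 = t" "delta v q1 = 1/2 + t" using q1 chi unfolding q1_def by (simp_all add: delta_at)
  have "f n q1 = 1/2" unfolding f_def using dq1 t(1) nt by (simp add: min_def)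
  moreover have "f n q1 \<le> s q1" using s(2) by (simp add: le_fun_def)
  ultimately have "s q1 \<ge> 1/2" by simp
  then have sq2: "s q2 > 1/4" using s1 s2 by linarith
  define m where "m = 1 / t"
  define h :: "('a \<Rightarrow> real) \<Rightarrow> real"
    where "h = (\<lambda>t'. max (delta v t' - delta u t' - m * max ((-1) * delta u t') 0) 0)"
  have hgen: "h \<in> gen_sublattice" unfolding h_def by (intro gen_pos gen_diff gen_cmul gen_delta)
  have dq2: "delta u q2 = -t" "delta v q2 = 1/2 - t" using q2 chi unfolding q2_def by (simp_all add: delta_at)
  have mt: "m * t = 1" unfolding m_def using t(1) by simp
  have hq2: "h q2 \<le> 0" unfolding h_def using dq2 mt t(1) by simp
  have m0: "m \<ge> 0" unfolding m_def using t(1) by simp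
  have fh: "f n' \<le> h" for n' unfolding f_def h_def
    by (rule le_funI, rule real_ineq1) (use m0 in auto)
  define s' where "s' = (\<lambda>t'. min (s t') (h t'))"
  have s'F: "s' \<in> FBL" unfolding s'_def by (rule FBL_min_gen[OF s(1) hgen])
  have "\<forall>a\<in>range f. a \<le> s'" using s(2) fh unfolding s'_def by (auto simp: le_fun_def)
  then have "s \<le> s'" using s(3) s'F by blast
  then have "s q2 \<le> s' q2" by (simp add: le_fun_def)
  also have "\<dots> \<le> 0" unfolding s'_def using hq2 by simp
  finally show False using sq2 by linarith
qed

lemma not_atom_sep:
  fixes a h :: "('a::lattice \<Rightarrow> real) \<Rightarrow> real"
  assumes atom: "is_atom_in FBL a" and h: "h \<in> gen_sublattice" "\<forall>t. h t \<ge> 0"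
    and p: "h p = 0" "a p > 0" and q: "h q > 0" "a q > 0"
  shows False
proof -
  have aF: "a \<in> FBL" and a0: "(\<lambda>_. 0) \<le> a"
    and P: "\<forall>y\<in>FBL. (\<lambda>_. 0) \<le> y \<and> y \<le> a \<longrightarrow> (\<exists>c::real. y = (\<lambda>t. c * a t))"
    using atom unfolding is_atom_in_def by auto
  define y where "y = (\<lambda>t. min (a t) (h t))"
  have yF: "y \<in> FBL" unfolding y_def by (rule FBL_min_gen[OF aF h(1)])
  have "(\<lambda>_. 0) \<le> y" using a0 h(2) unfolding y_def by (auto simp: le_fun_def)
  moreover have "y \<le> a" unfolding y_def by (auto simp: le_fun_def)
  ultimately obtain c where c: "y = (\<lambda>t. c * a t)" using P yF by blast
  have "y p = 0" unfolding y_def using p by simp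
  then have "c * a p = 0" using c by simp
  then have "c = 0" using p(2) by simp
  moreover have "y q > 0" unfolding y_def using q by simp
  ultimately show False using c by simp
qed

lemma no_atom:
  fixes u v :: "'a::distrib_lattice" and chi :: "'a \<Rightarrow> real"
  assumes chi: "chi \<in> Lstar" "chi u = 0" "chi v = 1" "\<forall>x. chi x = 0 \<or> chi x = 1"
  shows "\<not> (\<exists>a. is_atom_in (FBL :: (('a \<Rightarrow> real) \<Rightarrow> real) set) a)"
proof
  assume "\<exists>a. is_atom_in (FBL :: (('a \<Rightarrow> real) \<Rightarrow> real) set) a"
  then obtain a :: "('a \<Rightarrow> real) \<Rightarrow> real" where atom: "is_atom_in FBL a" by blast
  have aF: "a \<in> FBL" and a0: "(\<lambda>_. 0) \<le> a" and an: "a \<noteq> (\<lambda>_. 0)"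
    using atom unfolding is_atom_in_def by auto
  obtain x0 where ax0n: "a x0 \<noteq> 0" using an by auto
  have "0 \<le> a x0" using a0 by (simp add: le_fun_def)
  then have ax0: "a x0 > 0" using ax0n by linarith
  have x0: "x0 \<in> Lstar" using FBL_out[OF aF] ax0n by blast
  define p where "p = (\<lambda>x. 1/2 * x0 x)"
  have pL: "p \<in> Lstar" unfolding p_def using half_in[OF x0] .
  have ap: "a p > 0" unfolding p_def using FBL_half[OF aF x0] ax0 by simp
  obtain e where e: "e > 0" "\<forall>q\<in>Lstar. (\<forall>x. \<bar>q x - p x\<bar> \<le> e) \<longrightarrow> \<bar>a q - a p\<bar> < a p"
    using FBL_cont[OF aF pL ap] by blast
  define t where "t = min e (1/2)"
  have t: "t > 0" "t \<le> e" "\<bar>t\<bar> \<le> 1/2" using e unfolding t_def by auto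
  have near: "a q > 0" if qL: "q \<in> Lstar" and qd: "\<forall>x. \<bar>q x - p x\<bar> \<le> t" for q
  proof -
    have "\<forall>x. \<bar>q x - p x\<bar> \<le> e" using qd t(2) by (meson order_trans)
    then have "\<bar>a q - a p\<bar> < a p" using e(2) qL by blast
    then show ?thesis by linarith
  qed
  have pabs: "\<bar>p x\<bar> \<le> 1/2" for x unfolding p_def using Lstar_range[OF x0, of x] by simp
  show False
  proof (cases "\<exists>u' v'. p u' \<noteq> p v'")
    case True
    then obtain u' v' where uv: "p u' \<noteq> p v'" by blast
    define q where "q = (\<lambda>x. 1/2 * x0 x + t)"
    have qL: "q \<in> Lstar" unfolding q_def using half_shift[OF x0 t(3)] .
    have qp: "q x = p x + t" for x unfolding q_def p_def by simp
    have aq: "a q > 0" using near[OF qL] qp t by simp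
    define h where "h = (\<lambda>s. \<bar>p v' * delta u' s - p u' * delta v' s\<bar>)"
    have hgen: "h \<in> gen_sublattice" unfolding h_def by (intro gen_abs gen_diff gen_cmul gen_delta)
    have hp: "h p = 0" unfolding h_def using pL by (simp add: delta_at)
    have "h q = \<bar>p v' * (p u' + t) - p u' * (p v' + t)\<bar>" unfolding h_def using qL by (simp add: delta_at qp)
    also have "\<dots> = \<bar>t * (p v' - p u')\<bar>" by (rule arg_cong[where f=abs]) (simp add: algebra_simps)
    also have "\<dots> = t * \<bar>p v' - p u'\<bar>" using t(1) by (simp add: abs_mult)
    finally have hq: "h q > 0" using uv t(1) by simp
    have hnn: "\<forall>s. h s \<ge> 0" unfolding h_def by simp
    show False using atom hgen hnn hp ap hq aq by (rule not_atom_sep[of a h p q])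
  next
    case False
    then have const: "p x = p u" for x by blast
    define q where "q = (\<lambda>x. t * chi x + p u)"
    have qL: "q \<in> Lstar" unfolding q_def
    proof (rule Lstar_affine[OF chi(1)])
      show "0 \<le> t" using t by simp
      show "\<forall>x. t * chi x + p u \<in> {-1..1}"
      proof
        fix x
        have "chi x = 0 \<or> chi x = 1" using chi(4) by blast
        then show "t * chi x + p u \<in> {-1..1}" using t pabs[of u] by (auto simp: abs_le_iff)
      qed
    qed
    have "\<bar>q x - p x\<bar> \<le> t" for x
    proof -
      have "chi x = 0 \<or> chi x = 1" using chi(4) by blast
      then show ?thesis unfolding q_def using const[of x] t by auto
    qed
    then have aq: "a q > 0" using near[OF qL] by simp
    define h where "h = (\<lambda>s. \<bar>delta v s - delta u s\<bar>)"
    have hgen: "h \<in> gen_sublattice" unfolding h_def by (intro gen_abs gen_diff gen_delta)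
    have hp: "h p = 0" unfolding h_def using pL const[of v] by (simp add: delta_at)
    have "delta v q = t + p u" "delta u q = p u" using qL chi unfolding q_def by (simp_all add: delta_at)
    then have hq: "h q > 0" unfolding h_def using t by simp
    have hnn: "\<forall>s. h s \<ge> 0" unfolding h_def by simp
    show False using atom hgen hnn hp ap hq aq by (rule not_atom_sep[of a h p q])
  qed
qed

theorem mainTheorem12:
  assumes "\<exists>a b :: 'a::distrib_lattice. a \<noteq> b"
  shows "\<not> dedekind_sigma_complete (FBL :: (('a \<Rightarrow> real) \<Rightarrow> real) set)
       \<and> \<not> order_continuous_norm (FBL :: (('a \<Rightarrow> real) \<Rightarrow> real) set) fbl_norm
       \<and> \<not> (\<exists>a. is_atom_in (FBL :: (('a \<Rightarrow> real) \<Rightarrow> real) set) a)"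
proof -
  obtain u v :: 'a and chi where chi: "chi \<in> Lstar" "chi u = 0" "chi v = 1" "\<forall>x. chi x = 0 \<or> chi x = 1"
    using chi_exists[OF assms] by blast
  show ?thesis using not_dsc[OF chi(1-3)] not_oc[OF chi(1-3)] no_atom[OF chi] by blast
qed


end
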